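(* $\operatorname{Sort}\mid_{\mathrm{W}}\operatorname{C}_\mathbb{R}$, i.e. $\operatorname{Sort}\not\le_{\mathrm{W}}\operatorname{C}_\mathbb{R}$ and $\operatorname{C}_\mathbb{R}\not\le_{\mathrm{W}}\operatorname{Sort}$.
   Context: Represented spaces: a representation of a set $X$ is a partial surjection $\delta_X:\subseteq\mathbb{N}^\mathbb{N}\to X$. For a partial multi-valued function $f:\subseteq X\rightrightarrows Y$, a realizer is a partial $F:\subseteq\mathbb{N}^\mathbb{N}\to\mathbb{N}^\mathbb{N}$ with $\delta_Y(F(p))\in f(\delta_X(p))$ for all $p$ with $\delta_X(p)\in\mathrm{dom}(f)$. Weihrauch reducibility: $f\le_{\mathrm{W}} g$ iff there are computable partial $H:\subseteq\mathbb{N}^\mathbb{N}\times\mathbb{N}^\mathbb{N}\to\mathbb{N}^\mathbb{N}$ and $K:\subseteq\mathbb{N}^\mathbb{N}\to\mathbb{N}^\mathbb{N}$ such that $p\mapsto H(p,G(K(p)))$ is a realizer of $f$ for every realizer $G$ of $g$. $\operatorname{Sort}:2^\mathbb{N}\to 2^\mathbb{N}$ is defined by $\operatorname{Sort}(p)=0^n1^\mathbb{N}$ if $p$ contains exactly $n$ occurrences of $0$, and $\operatorname{Sort}(p)=0^\mathbb{N}$ if $p$ contains infinitely many occurrences of $0$. $\mathbb{R}$ carries the Cauchy representation (names are sequences of rationals $(q_i)$ with $|q_i-q_j|\le2^{-i}$ for $j\ge i$, naming their limit). $\mathcal{A}_-(\mathbb{R})$ is the space of closed subsets of $\mathbb{R}$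 with negative information: a name of closed $A$ is an enumeration of rational open intervals whose union is $\mathbb{R}\setminus A$. Closed choice $\operatorname{C}_\mathbb{R}:\subseteq\mathcal{A}_-(\mathbb{R})\rightrightarrows\mathbb{R}$ maps each nonempty closed $A$ to the set $A$ (any element of $A$ is a valid output). *)

theory Defs
  imports "HOL-Analysis.Analysis" "HOL-Library.Nat_Bijection"
begin

type_synonym baire = "nat \<Rightarrow> nat"

text \<open>A partial recursive function of arity n is modelled as a map on nat lists
(only its values on lists of length n matter).\<close>

fun prec :: "(nat list \<Rightarrow> nat option) \<Rightarrow> (nat list \<Rightarrow> nat option) \<Rightarrow> nat \<Rightarrow> nat list \<Rightarrow> nat option" where
  "prec f g 0 xs = f xs"
| "prec f g (Suc y) xs = (case prec f g y xs of None \<Rightarrow> None | Some r \<Rightarrow> g (y # r # xs))"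

inductive partrec :: "nat \<Rightarrow> (nat list \<Rightarrow> nat option) \<Rightarrow> bool" where
  pr_zero: "partrec n (\<lambda>_. Some 0)"
| pr_succ: "partrec 1 (\<lambda>xs. Some (Suc (hd xs)))"
| pr_proj: "i < n \<Longrightarrow> partrec n (\<lambda>xs. Some (xs ! i))"
| pr_comp: "partrec m f \<Longrightarrow> length gs = m \<Longrightarrow> (\<forall>g\<in>set gs. partrec n g) \<Longrightarrow>
     partrec n (\<lambda>xs. if (\<forall>g\<in>set gs. g xs \<noteq> None) then f (map (\<lambda>g. the (g xs)) gs) else None)"
| pr_prim: "partrec n f \<Longrightarrow> partrec (n + 2) g \<Longrightarrow>
     partrec (n + 1) (\<lambda>xs. prec f g (hd xs) (tl xs))"
| pr_mu: "partrec (n + 1) f \<Longrightarrow>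
     partrec n (\<lambda>xs. if (\<exists>y. f (y # xs) = Some 0 \<and> (\<forall>z<y. \<exists>v. f (z # xs) = Some (Suc v)))
                     then Some (LEAST y. f (y # xs) = Some 0 \<and> (\<forall>z<y. \<exists>v. f (z # xs) = Some (Suc v)))
                     else None)"

definition computable_nat :: "(nat \<Rightarrow> nat) \<Rightarrow> bool" where
  "computable_nat a \<longleftrightarrow> (\<exists>h. partrec 1 h \<and> (\<forall>x. h [x] = Some (a x)))"

text \<open>A total computable a : nat \<Rightarrow> nat determines the partial function
  F_a(p)(n) = a(<n, p[k]>) - 1 where k is least with a(<n, p[k]>) > 0;
  F_a(p) is defined iff such k exists for every n.  A partial function on
  Baire space is computable iff it is (a restriction of) some F_a with a computable.\<close>

definition assoc_code :: "nat \<Rightarrow> nat list \<Rightarrow> nat" where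
  "assoc_code n w = prod_encode (n, list_encode w)"

definition assoc_eval :: "(nat \<Rightarrow> nat) \<Rightarrow> baire \<Rightarrow> baire option" where
  "assoc_eval a p =
     (if (\<forall>n. \<exists>k. a (assoc_code n (map p [0..<k])) > 0)
      then Some (\<lambda>n. a (assoc_code n (map p [0..<(LEAST k. a (assoc_code n (map p [0..<k])) > 0)])) - 1)
      else None)"

definition baire_pair :: "baire \<Rightarrow> baire \<Rightarrow> baire" where
  "baire_pair p q = (\<lambda>n. if even n then p (n div 2) else q (n div 2))"

text \<open>Representations: partial maps delta :: baire \<Rightarrow> 'a option (surjective onto 'a).
  Partial multi-valued problems: domain D and value map f :: 'a \<Rightarrow> 'b set.\<close>

definition is_realizer ::
  "(baire \<Rightarrow> 'a option) \<Rightarrow> (baire \<Rightarrow> 'b option) \<Rightarrow> 'a set \<Rightarrow> ('a \<Rightarrow> 'b set)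
     \<Rightarrow> (baire \<Rightarrow> baire option) \<Rightarrow> bool" where
  "is_realizer dX dY D f F \<longleftrightarrow>
     (\<forall>p x. dX p = Some x \<longrightarrow> x \<in> D \<longrightarrow>
        (\<exists>q y. F p = Some q \<and> dY q = Some y \<and> y \<in> f x))"

definition weihrauch_le ::
  "(baire \<Rightarrow> 'a option) \<Rightarrow> (baire \<Rightarrow> 'b option) \<Rightarrow> 'a set \<Rightarrow> ('a \<Rightarrow> 'b set) \<Rightarrow>
   (baire \<Rightarrow> 'c option) \<Rightarrow> (baire \<Rightarrow> 'd option) \<Rightarrow> 'c set \<Rightarrow> ('c \<Rightarrow> 'd set) \<Rightarrow> bool" where
  "weihrauch_le dX dY D f dZ dW E g \<longleftrightarrow>
     (\<exists>aH aK. computable_nat aH \<and> computable_nat aK \<and>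
        (\<forall>G. is_realizer dZ dW E g G \<longrightarrow>
           is_realizer dX dY D f
             (\<lambda>p. case assoc_eval aK p of
                     None \<Rightarrow> None
                   | Some k \<Rightarrow> (case G k of None \<Rightarrow> None
                                | Some r \<Rightarrow> assoc_eval aH (baire_pair p r)))))"

definition delta_cantor :: "baire \<Rightarrow> baire option" where
  "delta_cantor p = (if (\<forall>n. p n \<le> 1) then Some p else None)"

definition Sort_fun :: "baire \<Rightarrow> baire" where
  "Sort_fun p = (if finite {i. p i = 0}
                 then (\<lambda>i. if i < card {i. p i = 0} then 0 else 1)
                 else (\<lambda>_. 0))"

definition Sort_dom :: "baire set" where
  "Sort_dom = {p. \<forall>n. p n \<le> 1}"

definition Sort_prob :: "baire \<Rightarrow> baire set" where
  "Sort_prob p = {Sort_fun p}"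

definition nu_rat :: "nat \<Rightarrow> rat" where
  "nu_rat n = (case prod_decode n of (a, b) \<Rightarrow> Fract (int_decode a) (int b + 1))"

definition delta_real :: "baire \<Rightarrow> real option" where
  "delta_real p =
     (if (\<forall>i j. i \<le> j \<longrightarrow> \<bar>nu_rat (p i) - nu_rat (p j)\<bar> \<le> 1 / 2 ^ i)
      then Some (lim (\<lambda>i. real_of_rat (nu_rat (p i))))
      else None)"

text \<open>Negative information representation of closed subsets of R:
  p n = 0 means "no interval", p n = Suc m codes the rational open interval
  (nu_rat a, nu_rat b) with (a, b) = prod_decode m; p names the complement of
  the union of the enumerated intervals.\<close>
definition code_interval :: "nat \<Rightarrow> real set" where
  "code_interval c = (case c of 0 \<Rightarrow> {}
      | Suc m \<Rightarrow> (case prod_decode m of (a, b) \<Rightarrow>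
           {real_of_rat (nu_rat a) <..< real_of_rat (nu_rat b)}))"

definition delta_closed :: "baire \<Rightarrow> real set option" where
  "delta_closed p = Some (- (\<Union>n. code_interval (p n)))"

definition CR_dom :: "real set set" where
  "CR_dom = {A. closed A \<and> A \<noteq> {}}"

definition CR_prob :: "real set \<Rightarrow> real set" where
  "CR_prob A = A"

end

theory Submission
  imports Defs
begin


section \<open>Associates\<close>

lemma assoc_least_same:
  assumes pos: "a (assoc_code n (map z [0..<k])) > 0" and agr: "\<forall>t<k. z' t = z t"
  shows "(LEAST k. a (assoc_code n (map z' [0..<k])) > 0) = (LEAST k. a (assoc_code n (map z [0..<k])) > 0)
     \<and> map z' [0..<(LEAST k. a (assoc_code n (map z [0..<k])) > 0)] = map z [0..<(LEAST k. a (assoc_code n (map z [0..<k])) > 0)]"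
proof -
  let ?P = "\<lambda>z k. a (assoc_code n (map z [0..<k])) > 0"
  define l where "l = (LEAST k. ?P z k)"
  have l1: "?P z l" unfolding l_def by (rule LeastI[of "?P z", OF pos])
  have l2: "l \<le> k" unfolding l_def by (rule Least_le, rule pos)
  have mapeq: "\<And>j. j \<le> k \<Longrightarrow> map z' [0..<j] = map z [0..<j]"
    using agr by auto
  have "(LEAST k. ?P z' k) = l"
  proof (rule Least_equality)
    show "?P z' l" using l1 by (simp only: mapeq[OF l2])
    fix y assume "?P z' y"
    show "l \<le> y"
    proof (rule ccontr)
      assume "\<not> l \<le> y"
      then have "y < l" by simp
      then have "?P z y" using \<open>?P z' y\<close> mapeq[of y] l2 by (simp del: map_eq_conv)
      then have "l \<le> y" unfolding l_def by (rule Least_le)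
      with \<open>y < l\<close> show False by simp
    qed
  qed
  then show ?thesis using mapeq[OF l2] unfolding l_def by simp
qed

lemma assoc_eval_value:
  assumes "assoc_eval a z = Some w"
  shows "w n = a (assoc_code n (map z [0..<(LEAST k. a (assoc_code n (map z [0..<k])) > 0)])) - 1"
  using assms unfolding assoc_eval_def by (auto split: if_splits)

lemma assoc_eval_ex:
  assumes "assoc_eval a z = Some w"
  shows "\<exists>k. a (assoc_code n (map z [0..<k])) > 0"
  using assms unfolding assoc_eval_def by (auto split: if_splits)

lemma assoc_eval_dec:
  assumes pos: "a (assoc_code n (map z [0..<k])) > 0" and agr: "\<forall>t<k. z' t = z t"
    and ev: "assoc_eval a z' = Some w'"
  shows "w' n = a (assoc_code n (map z [0..<(LEAST k. a (assoc_code n (map z [0..<k])) > 0)])) - 1"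
  using assoc_eval_value[OF ev, of n] assoc_least_same[where a=a and n=n and z=z and k=k and z'=z', OF pos agr] by (simp del: map_eq_conv)

lemma assoc_eval_cont:
  assumes "assoc_eval a z = Some w"
  shows "\<exists>N. \<forall>z' w'. (\<forall>t<N. z' t = z t) \<longrightarrow> assoc_eval a z' = Some w' \<longrightarrow> w' n = w n"
proof -
  obtain k where pos: "a (assoc_code n (map z [0..<k])) > 0" using assoc_eval_ex[OF assms] by blast
  show ?thesis
    apply (rule exI[of _ k])
    using assoc_eval_dec[where a=a and n=n and z=z and k=k, OF pos] assoc_eval_value[OF assms, of n] by auto
qed

lemma pair_agree:
  assumes "\<forall>t<N. p' t = p t" "\<forall>t<N. r' t = r t"
  shows "\<forall>t<N. baire_pair p' r' t = baire_pair p r t"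
  using assms unfolding baire_pair_def by auto

lemma pair_agree2:
  assumes "\<forall>t<N. p' t = p t"
  shows "\<forall>t<2*N. baire_pair p' r t = baire_pair p r t"
  using assms unfolding baire_pair_def by auto

section \<open>Rationals and reals\<close>

lemma nu_rat_surj: "\<exists>n. nu_rat n = q"
proof -
  obtain a b where q: "q = Fract a b" and b: "0 < b" by (cases q rule: Rat_cases) auto
  have "nu_rat (prod_encode (int_encode a, nat (b - 1))) = Fract a b"
    unfolding nu_rat_def using b by (simp add: int_encode_inverse)
  then show ?thesis using q by blast
qed

lemma nu_approx:
  fixes x :: real assumes "e > 0"
  shows "\<exists>n. \<bar>real_of_rat (nu_rat n) - x\<bar> < e"
proof -
  obtain r where "r \<in> \<rat>" "x - e < r" "r < x + e" using Rats_dense_in_real[of "x - e" "x + e"] assms by auto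
  then obtain q where "r = of_rat q" by (auto elim: Rats_cases)
  obtain n where "nu_rat n = q" using nu_rat_surj by blast
  then show ?thesis using \<open>x - e < r\<close> \<open>r < x + e\<close> \<open>r = of_rat q\<close> by (intro exI[of _ n]) auto
qed

lemma canon_name_ex:
  fixes x :: real
  shows "\<exists>c. \<forall>i. \<bar>real_of_rat (nu_rat (c i)) - x\<bar> \<le> 1 / 2 ^ (i + 2)"
proof -
  have "\<forall>i. \<exists>n. \<bar>real_of_rat (nu_rat n) - x\<bar> \<le> 1 / 2 ^ (i + 2)"
  proof
    fix i
    obtain n where "\<bar>real_of_rat (nu_rat n) - x\<bar> < 1 / 2 ^ (i + 2)"
      using nu_approx[of "1 / 2 ^ (i + 2)" x] by auto
    then show "\<exists>n. \<bar>real_of_rat (nu_rat n) - x\<bar> \<le> 1 / 2 ^ (i + 2)" by (intro exI[of _ n]) auto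
  qed
  then show ?thesis by metis
qed

lemma pow_half_tendsto: "(\<lambda>i. 1 / (2::real) ^ (i + 1)) \<longlonglongrightarrow> 0"
proof -
  have "(\<lambda>i. (1/2::real) ^ i) \<longlonglongrightarrow> 0" by (rule LIMSEQ_realpow_zero) auto
  then have "(\<lambda>i. (1/2::real) ^ i / 2) \<longlonglongrightarrow> 0 / 2" by (intro tendsto_divide) auto
  then show ?thesis by (simp add: power_divide mult.commute)
qed

lemma delta_real_I:
  assumes b: "\<forall>i. \<bar>real_of_rat (nu_rat (r i)) - x\<bar> \<le> 1 / 2 ^ (i + 1)"
  shows "delta_real r = Some x"
proof -
  have C: "\<forall>i j. i \<le> j \<longrightarrow> \<bar>nu_rat (r i) - nu_rat (r j)\<bar> \<le> 1 / 2 ^ i"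
  proof (intro allI impI)
    fix i j :: nat assume "i \<le> j"
    have "(1::real) / 2 ^ (j + 1) \<le> 1 / 2 ^ (i + 1)"
      using \<open>i \<le> j\<close> by (intro divide_left_mono power_increasing) auto
    then have "\<bar>real_of_rat (nu_rat (r i)) - real_of_rat (nu_rat (r j))\<bar> \<le> 1 / 2 ^ (i+1) + 1 / 2 ^ (i+1)"
      using b[rule_format, of i] b[rule_format, of j] by linarith
    also have "\<dots> = 1 / 2 ^ i" by simp
    finally have "real_of_rat \<bar>nu_rat (r i) - nu_rat (r j)\<bar> \<le> real_of_rat (1 / 2 ^ i)"
      by (simp add: of_rat_diff of_rat_divide of_rat_power flip: abs_of_rat)
    then show "\<bar>nu_rat (r i) - nu_rat (r j)\<bar> \<le> 1 / 2 ^ i" by (simp only: of_rat_less_eq)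
  qed
  have "(\<lambda>i. real_of_rat (nu_rat (r i))) \<longlonglongrightarrow> x"
  proof (rule tendsto_sandwich[of "\<lambda>i. x - 1 / 2 ^ (i + 1)" _ _ "\<lambda>i. x + 1 / 2 ^ (i + 1)"])
    show "\<forall>\<^sub>F n in sequentially. x - 1 / 2 ^ (n + 1) \<le> real_of_rat (nu_rat (r n))"
      apply (rule always_eventually, rule allI) subgoal for n using b[rule_format, of n] unfolding abs_le_iff by linarith done
    show "\<forall>\<^sub>F n in sequentially. real_of_rat (nu_rat (r n)) \<le> x + 1 / 2 ^ (n + 1)"
      apply (rule always_eventually, rule allI) subgoal for n using b[rule_format, of n] unfolding abs_le_iff by linarith done
    show "(\<lambda>n. x - 1 / 2 ^ (n + 1)) \<longlonglongrightarrow> x" using tendsto_diff[OF tendsto_const pow_half_tendsto, of x] by simp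
    show "(\<lambda>n. x + 1 / 2 ^ (n + 1)) \<longlonglongrightarrow> x" using tendsto_add[OF tendsto_const pow_half_tendsto, of x] by simp
  qed
  then have "lim (\<lambda>i. real_of_rat (nu_rat (r i))) = x" by (rule limI)
  then show ?thesis using C unfolding delta_real_def by simp
qed

lemma delta_real_bound:
  assumes "delta_real q = Some y"
  shows "\<bar>real_of_rat (nu_rat (q i)) - y\<bar> \<le> 1 / 2 ^ i"
proof -
  let ?X = "\<lambda>i. real_of_rat (nu_rat (q i))"
  have C: "\<forall>i j. i \<le> j \<longrightarrow> \<bar>nu_rat (q i) - nu_rat (q j)\<bar> \<le> 1 / 2 ^ i"
   and y: "y = lim ?X" using assms unfolding delta_real_def by (auto split: if_splits)
  have CR: "\<And>i j. i \<le> j \<Longrightarrow> \<bar>?X i - ?X j\<bar> \<le> 1 / 2 ^ i"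
  proof -
    fix i j :: nat assume "i \<le> j"
    then have "real_of_rat \<bar>nu_rat (q i) - nu_rat (q j)\<bar> \<le> real_of_rat (1 / 2 ^ i)"
      using C by (simp only: of_rat_less_eq)
    then show "\<bar>?X i - ?X j\<bar> \<le> 1 / 2 ^ i" by (simp add: of_rat_diff of_rat_divide of_rat_power flip: abs_of_rat)
  qed
  have "Cauchy ?X"
  proof (rule metric_CauchyI)
    fix e :: real assume "e > 0"
    have "e / 4 > 0" using \<open>e > 0\<close> by simp
    then obtain M where M: "1 / 2 ^ (M+1) < e / 4"
      using pow_half_tendsto[unfolded lim_sequentially] by fastforce
    show "\<exists>M. \<forall>m\<ge>M. \<forall>n\<ge>M. dist (?X m) (?X n) < e"
    proof (intro exI[of _ M] allI impI)
      fix m n assume "M \<le> m" "M \<le> n"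
      have a: "\<bar>?X M - ?X m\<bar> \<le> 1 / 2 ^ M" "\<bar>?X M - ?X n\<bar> \<le> 1 / 2 ^ M"
        using CR \<open>M \<le> m\<close> \<open>M \<le> n\<close> by auto
      have "dist (?X m) (?X n) \<le> 2 / 2 ^ M" using a by (simp add: dist_real_def)
      also have "\<dots> = 1 / 2 ^ (M+1) * 4" by simp
      finally show "dist (?X m) (?X n) < e" using M by simp
    qed
  qed
  then have "convergent ?X" by (rule Cauchy_convergent)
  then have "?X \<longlonglongrightarrow> y" using y by (simp add: convergent_LIMSEQ_iff)
  then have "(\<lambda>j. \<bar>?X i - ?X j\<bar>) \<longlonglongrightarrow> \<bar>?X i - y\<bar>"
    by (intro tendsto_intros)
  then show ?thesis by (rule Lim_bounded[where M=i]) (auto intro: CR)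
qed



definition dc :: "baire \<Rightarrow> real set" where "dc k = - (\<Union>n. code_interval (k n))"

lemma delta_closed_dc: "delta_closed k = Some (dc k)"
  unfolding delta_closed_def dc_def by simp

lemma open_code_interval: "open (code_interval c)"
  unfolding code_interval_def by (auto split: nat.splits prod.splits)

lemma closed_dc: "closed (dc k)"
  unfolding dc_def using open_code_interval by (intro closed_Compl open_UN) auto

lemma name_near:
  fixes c :: baire and l y :: real
  assumes c: "\<forall>i. \<bar>real_of_rat (nu_rat (c i)) - l\<bar> \<le> 1/2^(i+2)" and yl: "\<bar>y - l\<bar> \<le> 1/2^(N+1)"
  shows "\<exists>r'. delta_real r' = Some y \<and> (\<forall>t<N. r' t = c t)"
proof -
  obtain c' where c': "\<forall>i. \<bar>real_of_rat (nu_rat (c' i)) - y\<bar> \<le> 1/2^(i+2)" using canon_name_ex by blast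
  define r' where "r' = (\<lambda>i. if i < N then c i else c' i)"
  have "\<forall>i. \<bar>real_of_rat (nu_rat (r' i)) - y\<bar> \<le> 1/2^(i+1)"
  proof
    fix i
    show "\<bar>real_of_rat (nu_rat (r' i)) - y\<bar> \<le> 1/2^(i+1)"
    proof (cases "i < N")
      case True
      have "(1::real)/2^(N+1) \<le> 1/2^(i+2)" using True by (intro divide_left_mono power_increasing) auto
      then have "\<bar>real_of_rat (nu_rat (c i)) - y\<bar> \<le> 1/2^(i+2) + 1/2^(i+2)"
        using c[rule_format, of i] yl by linarith
      then show ?thesis using True by (simp add: r'_def)
    next
      case False
      have "(1::real)/2^(i+2) \<le> 1/2^(i+1)" by (intro divide_left_mono power_increasing) auto
      then show ?thesis using False c'[rule_format, of i] by (simp add: r'_def)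
    qed
  qed
  then show ?thesis using delta_real_I by (intro exI[of _ r']) (auto simp: r'_def)
qed

lemma canon_delta:
  assumes "\<forall>i. \<bar>real_of_rat (nu_rat (c i)) - l\<bar> \<le> 1/2^(i+2)"
  shows "delta_real c = Some l"
proof (rule delta_real_I, rule allI)
  fix i
  have "(1::real)/2^(i+2) \<le> 1/2^(i+1)" by (intro divide_left_mono power_increasing) auto
  then show "\<bar>real_of_rat (nu_rat (c i)) - l\<bar> \<le> 1/2^(i+1)" using assms by (meson order_trans)
qed

lemma limit_seq:
  fixes P :: "nat \<Rightarrow> baire" and L :: "nat \<Rightarrow> nat"
  assumes agr: "\<And>n. \<forall>t<L n. P (Suc n) t = P n t" and Lmono: "\<And>n. L n < L (Suc n)"
  shows "\<forall>t<L n. P (Suc t) t = P n t"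
proof -
  have Lge: "\<And>n. n \<le> L n"
  proof -
    fix n show "n \<le> L n" by (induction n) (use Lmono in \<open>auto simp: Suc_le_eq intro: le_less_trans\<close>)
  qed
  have Lm: "\<And>m n. n \<le> m \<Longrightarrow> L n \<le> L m" using Lmono by (metis lift_Suc_mono_le less_imp_le)
  have a: "\<And>m n. n \<le> m \<Longrightarrow> \<forall>t<L n. P m t = P n t"
  proof -
    fix m n :: nat assume "n \<le> m"
    then show "\<forall>t<L n. P m t = P n t"
    proof (induction m rule: dec_induct)
      case base then show ?case by simp
    next
      case (step m)
      then show ?case using agr[of m] Lm[OF step(1)] by auto
    qed
  qed
  show ?thesis
  proof (intro allI impI)
    fix t assume t: "t < L n"
    show "P (Suc t) t = P n t"
    proof (cases "Suc t \<le> n")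
      case True
      have "t < L (Suc t)" using Lge[of "Suc t"] by simp
      then show ?thesis using a[OF True] by simp
    next
      case False
      then show ?thesis using a[of n "Suc t"] t by simp
    qed
  qed
qed

lemma zeros_fin: "\<forall>i\<ge>L. (p::baire) i = (1::nat) \<Longrightarrow> finite {i. p i = 0}"
proof (rule finite_subset[of _ "{..<L}"])
  assume a: "\<forall>i\<ge>L. p i = (1::nat)"
  show "{i. p i = 0} \<subseteq> {..<L}"
  proof
    fix x assume "x \<in> {i. p i = 0}"
    then have px: "p x = 0" by simp
    show "x \<in> {..<L}"
    proof (rule ccontr)
      assume "x \<notin> {..<L}"
      then have "L \<le> x" by simp
      then have "p x = 1" using a by blast
      then show False using px by simp
    qed
  qed
qed simp

lemma sort_at_card: "finite {i. p i = 0} \<Longrightarrow> Sort_fun p (card {i. p i = 0}) = 1"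
  unfolding Sort_fun_def by simp

lemma sort_add_zero:
  assumes "finite {i. p i = 0}" "p m \<noteq> 0"
  shows "Sort_fun (p(m:=0)) (card {i. p i = 0}) = 0"
proof -
  have e: "{i. (p(m:=0)) i = 0} = insert m {i. p i = 0}" by auto
  have "m \<notin> {i. p i = 0}" using assms by simp
  then have "card {i. (p(m:=0)) i = 0} = Suc (card {i. p i = 0})" using e assms by simp
  then show ?thesis unfolding Sort_fun_def using e assms by simp
qed

definition P1 :: "(nat \<Rightarrow> nat) \<Rightarrow> (nat \<Rightarrow> nat) \<Rightarrow> bool" where
  "P1 aH aK \<longleftrightarrow> (\<forall>p. (\<forall>n. p n \<le> 1) \<longrightarrow> (\<exists>k. assoc_eval aK p = Some k \<and> dc k \<noteq> {} \<and>
      (\<forall>x r. x \<in> dc k \<longrightarrow> delta_real r = Some x \<longrightarrow> assoc_eval aH (baire_pair p r) = Some (Sort_fun p))))"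

lemma escape:
  fixes aH aK :: "nat \<Rightarrow> nat" and M :: real
  assumes P: "P1 aH aK" and p01: "\<forall>n. p n \<le> 1" and pL: "\<forall>i\<ge>L. p i = 1"
  shows "\<exists>k. \<forall>kk. assoc_eval aK (p(L+k:=0)) = Some kk \<longrightarrow> dc kk \<inter> {-M..M} = {}"
proof (rule ccontr)
  assume "\<not> ?thesis"
  then have "\<forall>k. \<exists>kk y. assoc_eval aK (p(L+k:=0)) = Some kk \<and> y \<in> dc kk \<inter> {-M..M}" by blast
  then obtain kkf y where kkf: "\<And>k. assoc_eval aK (p(L+k:=0)) = Some (kkf k)"
      and y: "\<And>k. y k \<in> dc (kkf k) \<inter> {-M..M}" by metis
  have "seq_compact {-M..M}" by (rule compact_imp_seq_compact) simp
  then obtain l r where l: "l \<in> {-M..M}" and r: "strict_mono r" and lim: "(y \<circ> r) \<longlonglongrightarrow> l"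
    unfolding seq_compact_def using y by (metis IntD2)
  have rge: "\<And>j. j \<le> r j" using seq_suble[OF r] by simp
  obtain kp where kp: "assoc_eval aK p = Some kp" and kpH: "\<forall>x r. x \<in> dc kp \<longrightarrow> delta_real r = Some x \<longrightarrow> assoc_eval aH (baire_pair p r) = Some (Sort_fun p)"
    using P p01 unfolding P1_def by blast
  have agrk: "\<And>k N. N \<le> k \<Longrightarrow> \<forall>t<N. (p(L+k:=0)) t = p t" by auto
  have lin: "l \<in> dc kp"
  proof (rule ccontr)
    assume "l \<notin> dc kp"
    then obtain i where li: "l \<in> code_interval (kp i)" by (auto simp: dc_def)
    obtain e where e: "e>0" "ball l e \<subseteq> code_interval (kp i)"
      using open_code_interval li open_contains_ball by blast
    obtain N where N: "\<forall>z' w'. (\<forall>t<N. z' t = p t) \<longrightarrow> assoc_eval aK z' = Some w' \<longrightarrow> w' i = kp i"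
      using assoc_eval_cont[OF kp] by blast
    obtain J where J: "\<forall>j\<ge>J. dist ((y \<circ> r) j) l < e" using lim e(1) unfolding lim_sequentially by blast
    define j where "j = max J N"
    have "N \<le> r j" using rge[of j] unfolding j_def by linarith
    then have "kkf (r j) i = kp i" using N agrk kkf by blast
    moreover have "y (r j) \<in> ball l e" using J unfolding j_def by (simp add: dist_commute)
    ultimately have "y (r j) \<in> code_interval (kkf (r j) i)" using e by auto
    then show False using y[of "r j"] by (auto simp: dc_def)
  qed
  obtain c where c: "\<forall>i. \<bar>real_of_rat (nu_rat (c i)) - l\<bar> \<le> 1/2^(i+2)" using canon_name_ex by blast
  have H: "assoc_eval aH (baire_pair p c) = Some (Sort_fun p)"
    using kpH lin canon_delta[OF c] by blast
  define j where "j = card {i. p i = 0}"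
  have fin: "finite {i. p i = 0}" using zeros_fin pL by blast
  obtain N2 where N2: "\<forall>z' w'. (\<forall>t<N2. z' t = baire_pair p c t) \<longrightarrow> assoc_eval aH z' = Some w' \<longrightarrow> w' j = Sort_fun p j"
    using assoc_eval_cont[OF H] by blast
  have "(1::real)/2^(N2+1) > 0" by simp
  then obtain J2 where J2: "\<forall>jj\<ge>J2. dist ((y \<circ> r) jj) l < 1/2^(N2+1)" using lim unfolding lim_sequentially by blast
  define k where "k = r (max J2 N2)"
  have kN2: "N2 \<le> k" using rge[of "max J2 N2"] unfolding k_def by linarith
  have "dist ((y \<circ> r) (max J2 N2)) l < 1/2^(N2+1)" using J2 by simp
  then have ykl: "\<bar>y k - l\<bar> \<le> 1/2^(N2+1)" unfolding k_def by (simp add: dist_real_def)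
  obtain r' where r': "delta_real r' = Some (y k)" "\<forall>t<N2. r' t = c t"
    using name_near[OF c ykl] by blast
  define pk where "pk = p(L+k:=0)"
  have pk01: "\<forall>n. pk n \<le> 1" using p01 unfolding pk_def by simp
  obtain kk' where kk': "assoc_eval aK pk = Some kk'" and kk'H: "\<forall>x r. x \<in> dc kk' \<longrightarrow> delta_real r = Some x \<longrightarrow> assoc_eval aH (baire_pair pk r) = Some (Sort_fun pk)"
    using P pk01 unfolding P1_def by blast
  have "kk' = kkf k" using kk' kkf[of k] unfolding pk_def by simp
  then have H2: "assoc_eval aH (baire_pair pk r') = Some (Sort_fun pk)" using kk'H y[of k] r'(1) by blast
  have "\<forall>t<N2. pk t = p t" using agrk[OF kN2] unfolding pk_def by blast
  then have "\<forall>t<N2. baire_pair pk r' t = baire_pair p c t" using pair_agree r'(2) by blast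
  then have "Sort_fun pk j = Sort_fun p j" using N2 H2 by blast
  moreover have "Sort_fun p j = 1" using sort_at_card[OF fin] unfolding j_def .
  moreover have "Sort_fun pk j = 0" unfolding pk_def j_def using sort_add_zero[OF fin, of "L+k"] pL by simp
  ultimately show False by simp
qed


lemma compact_step:
  fixes M :: real
  assumes kk: "assoc_eval aK q = Some kk" and emp: "dc kk \<inter> {-M..M} = {}"
  shows "\<exists>N. \<forall>q' kk'. (\<forall>t<N. q' t = q t) \<longrightarrow> assoc_eval aK q' = Some kk' \<longrightarrow> dc kk' \<inter> {-M..M} = {}"
proof -
  have cov: "{-M..M} \<subseteq> (\<Union>n\<in>UNIV. code_interval (kk n))" using emp unfolding dc_def by auto
  obtain C' where C': "finite C'" "{-M..M} \<subseteq> (\<Union>n\<in>C'. code_interval (kk n))"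
    using compactE_image[of "{-M..M}" UNIV "\<lambda>n. code_interval (kk n)"] cov open_code_interval by auto
  have "\<forall>n. \<exists>N. \<forall>z' w'. (\<forall>t<N. z' t = q t) \<longrightarrow> assoc_eval aK z' = Some w' \<longrightarrow> w' n = kk n"
    using assoc_eval_cont[OF kk] by blast
  then obtain Nf where Nf: "\<And>n. \<forall>z' w'. (\<forall>t<Nf n. z' t = q t) \<longrightarrow> assoc_eval aK z' = Some w' \<longrightarrow> w' n = kk n"
    by metis
  define N where "N = (\<Sum>n\<in>C'. Nf n)"
  have NN: "\<And>n. n \<in> C' \<Longrightarrow> Nf n \<le> N" unfolding N_def using C'(1) by (intro member_le_sum) auto
  show ?thesis
  proof (intro exI[of _ N] allI impI)
    fix q' kk' assume a: "\<forall>t<N. q' t = q t" "assoc_eval aK q' = Some kk'"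
    have "\<And>n. n \<in> C' \<Longrightarrow> kk' n = kk n"
    proof -
      fix n assume "n \<in> C'"
      then have "\<forall>t<Nf n. q' t = q t" using a(1) NN[of n] by auto
      then show "kk' n = kk n" using Nf[of n] a(2) by blast
    qed
    then have "{-M..M} \<subseteq> (\<Union>n\<in>C'. code_interval (kk' n))" using C'(2) by auto
    then show "dc kk' \<inter> {-M..M} = {}" unfolding dc_def by auto
  qed
qed

definition Q1 :: "(nat \<Rightarrow> nat) \<Rightarrow> nat \<Rightarrow> baire \<Rightarrow> nat \<Rightarrow> baire \<Rightarrow> nat \<Rightarrow> bool" where
  "Q1 aK n p L p' L' \<longleftrightarrow> (\<forall>n. p' n \<le> 1) \<and> (\<forall>i\<ge>L'. p' i = 1) \<and> L < L' \<and> (\<forall>t<L. p' t = p t) \<and>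
     (\<forall>q kk. (\<forall>t<L'. q t = p' t) \<longrightarrow> assoc_eval aK q = Some kk \<longrightarrow> dc kk \<inter> {-real n..real n} = {})"

lemma part1_step:
  assumes P: "P1 aH aK" and p01: "\<forall>n. p n \<le> 1" and pL: "\<forall>i\<ge>L. p i = 1"
  shows "\<exists>x. Q1 aK n p L (fst x) (snd x)"
proof -
  obtain k where k: "\<forall>kk. assoc_eval aK (p(L+k:=0)) = Some kk \<longrightarrow> dc kk \<inter> {-real n..real n} = {}"
    using escape[OF P p01 pL] by blast
  define p' where "p' = p(L+k:=0)"
  have p'01: "\<forall>n. p' n \<le> 1" using p01 unfolding p'_def by simp
  obtain kk where kk: "assoc_eval aK p' = Some kk" using P p'01 unfolding P1_def by blast
  have "dc kk \<inter> {-real n..real n} = {}" using k kk unfolding p'_def by blast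
  then obtain N where N: "\<forall>q' kk'. (\<forall>t<N. q' t = p' t) \<longrightarrow> assoc_eval aK q' = Some kk' \<longrightarrow> dc kk' \<inter> {-real n..real n} = {}"
    using compact_step[OF kk] by blast
  define L' where "L' = max N (L+k+1)"
  have "Q1 aK n p L p' L'"
    unfolding Q1_def
  proof (intro conjI allI impI)
    show "\<And>n. p' n \<le> 1" using p'01 by blast
    show "\<And>i. L' \<le> i \<Longrightarrow> p' i = 1" using pL unfolding p'_def L'_def by auto
    show "L < L'" unfolding L'_def by simp
    show "\<And>t. t < L \<Longrightarrow> p' t = p t" unfolding p'_def by simp
    show "\<And>q kk. \<forall>t<L'. q t = p' t \<Longrightarrow> assoc_eval aK q = Some kk \<Longrightarrow> dc kk \<inter> {-real n..real n} = {}"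
    proof -
      fix q kk assume a: "\<forall>t<L'. q t = p' t" "assoc_eval aK q = Some kk"
      have "\<forall>t<N. q t = p' t" using a(1) unfolding L'_def by auto
      then show "dc kk \<inter> {-real n..real n} = {}" using N a(2) by blast
    qed
  qed
  then show ?thesis by (intro exI[of _ "(p', L')"]) simp
qed

lemma part1_main:
  assumes P: "P1 aH aK"
  shows False
proof -
  define st where "st = rec_nat ((\<lambda>_. 1)::baire, 0::nat) (\<lambda>n x. SOME y. Q1 aK n (fst x) (snd x) (fst y) (snd y))"
  have st0: "st 0 = ((\<lambda>_. 1), 0)" unfolding st_def by simp
  have stS: "\<And>n. st (Suc n) = (SOME y. Q1 aK n (fst (st n)) (snd (st n)) (fst y) (snd y))" unfolding st_def by simp
  have inv: "\<And>n. (\<forall>m. fst (st n) m \<le> 1) \<and> (\<forall>i\<ge>snd (st n). fst (st n) i = 1)"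
  proof -
    fix n show "(\<forall>m. fst (st n) m \<le> 1) \<and> (\<forall>i\<ge>snd (st n). fst (st n) i = 1)"
    proof (induction n)
      case 0 then show ?case using st0 by simp
    next
      case (Suc n)
      have "Q1 aK n (fst (st n)) (snd (st n)) (fst (st (Suc n))) (snd (st (Suc n)))"
        unfolding stS using someI_ex[OF part1_step[OF P, of "fst (st n)" "snd (st n)" n]] Suc by blast
      then show ?case unfolding Q1_def by blast
    qed
  qed
  have Qn: "\<And>n. Q1 aK n (fst (st n)) (snd (st n)) (fst (st (Suc n))) (snd (st (Suc n)))"
    unfolding stS using someI_ex[OF part1_step[OF P]] inv by blast
  define pinf where "pinf = (\<lambda>t. fst (st (Suc t)) t)"
  have agr: "\<And>n. \<forall>t<snd (st n). pinf t = fst (st n) t"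
    unfolding pinf_def
    by (rule limit_seq[where P="\<lambda>n. fst (st n)" and L="\<lambda>n. snd (st n)"]) (use Qn in \<open>auto simp: Q1_def\<close>)
  have p01: "\<forall>m. pinf m \<le> 1" unfolding pinf_def using inv by blast
  obtain kk where kk: "assoc_eval aK pinf = Some kk" "dc kk \<noteq> {}" using P p01 unfolding P1_def by blast
  then obtain x where x: "x \<in> dc kk" by blast
  define n where "n = nat \<lceil>\<bar>x\<bar>\<rceil>"
  have xn: "x \<in> {-real n..real n}" unfolding n_def by (auto simp: abs_le_iff) linarith+
  have "\<forall>t<snd (st (Suc n)). pinf t = fst (st (Suc n)) t" using agr by blast
  then have "dc kk \<inter> {-real n..real n} = {}" using Qn[of n] kk(1) unfolding Q1_def by blast
  then show False using x xn by blast
qed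



definition sseq :: "nat \<Rightarrow> baire" where
  "sseq n = (case n of 0 \<Rightarrow> (\<lambda>_. 0) | Suc m \<Rightarrow> (\<lambda>i. if i < m then 0 else 1))"

definition P2 :: "(nat \<Rightarrow> nat) \<Rightarrow> bool" where
  "P2 aH \<longleftrightarrow> (\<forall>p. dc p \<noteq> {} \<longrightarrow> (\<exists>n q y. assoc_eval aH (baire_pair p (sseq n)) = Some q \<and> delta_real q = Some y \<and> y \<in> dc p))"

definition cnd :: "baire \<Rightarrow> nat \<Rightarrow> real set \<Rightarrow> bool" where
  "cnd p L R \<longleftrightarrow> (\<forall>i\<ge>L. p i = 0) \<and> compact R \<and> (\<forall>i<L. code_interval (p i) \<inter> R = {})"

definition lee :: "baire \<Rightarrow> nat \<Rightarrow> real set \<Rightarrow> baire \<Rightarrow> nat \<Rightarrow> real set \<Rightarrow> bool" where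
  "lee p' L' R' p L R \<longleftrightarrow> L \<le> L' \<and> (\<forall>t<L. p' t = p t) \<and> R' \<subseteq> R"

abbreviation mu :: "real set \<Rightarrow> real" where "mu R \<equiv> measure lborel R"

definition dlt :: "nat \<Rightarrow> real" where "dlt n = (1/8)^(n+1)"

definition dec :: "(nat \<Rightarrow> nat) \<Rightarrow> nat \<Rightarrow> nat \<Rightarrow> baire \<Rightarrow> nat \<Rightarrow> bool" where
  "dec aH n i p L \<longleftrightarrow> (\<exists>k\<le>2*L. aH (assoc_code i (map (baire_pair p (sseq n)) [0..<k])) > 0)"

definition S2 :: "(nat \<Rightarrow> nat) \<Rightarrow> nat \<Rightarrow> baire \<Rightarrow> nat \<Rightarrow> real set \<Rightarrow> baire \<Rightarrow> nat \<Rightarrow> real set \<Rightarrow> bool" where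
  "S2 aH n p L R p' L' R' \<longleftrightarrow> cnd p' L' R' \<and> lee p' L' R' p L R \<and> L < L' \<and>
    ((mu R' = mu R \<and> (\<exists>i. \<forall>p'' L'' R''. cnd p'' L'' R'' \<longrightarrow> lee p'' L'' R'' p L R \<longrightarrow> mu R'' \<ge> mu R - dlt n \<longrightarrow> \<not> dec aH n i p'' L''))
     \<or> (mu R' \<ge> mu R - 2 * dlt n \<and>
        (\<forall>p'' q y. (\<forall>t<L'. p'' t = p' t) \<longrightarrow> assoc_eval aH (baire_pair p'' (sseq n)) = Some q \<longrightarrow> delta_real q = Some y
             \<longrightarrow> (\<exists>j<L'. y \<in> code_interval (p' j)))))"

lemma code_interval_ex:
  fixes a b :: rat
  shows "\<exists>c. code_interval c = {real_of_rat a <..< real_of_rat b}"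
proof -
  obtain x where x: "nu_rat x = a" using nu_rat_surj by blast
  obtain y where y: "nu_rat y = b" using nu_rat_surj by blast
  show ?thesis by (intro exI[of _ "Suc (prod_encode (x, y))"]) (simp add: code_interval_def x y)
qed

lemma pow_eq: "4 / (2::real) ^ (3 * n + 5) = dlt n"
proof -
  have "(2::real) ^ (3 * n + 5) = 32 * 8 ^ n" by (simp add: power_add power_mult)
  then show ?thesis unfolding dlt_def by (simp add: power_divide)
qed

lemma part2_step:
  assumes c: "cnd p L R"
  shows "\<exists>x. S2 aH n p L R (fst x) (fst (snd x)) (snd (snd x))"
proof -
  define i where "i = 3 * n + 5"
  define B where "B = (\<forall>p'' L'' R''. cnd p'' L'' R'' \<longrightarrow> lee p'' L'' R'' p L R \<longrightarrow> mu R'' \<ge> mu R - dlt n \<longrightarrow> \<not> dec aH n i p'' L'')"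
  show ?thesis
  proof (cases B)
    case True
    have "S2 aH n p L R p (Suc L) R"
      unfolding S2_def
    proof (intro conjI)
      show "cnd p (Suc L) R" using c unfolding cnd_def by (auto simp: less_Suc_eq code_interval_def)
      show "lee p (Suc L) R p L R" unfolding lee_def by simp
      show "L < Suc L" by simp
      show "(mu R = mu R \<and> (\<exists>i. \<forall>p'' L'' R''. cnd p'' L'' R'' \<longrightarrow> lee p'' L'' R'' p L R \<longrightarrow> mu R'' \<ge> mu R - dlt n \<longrightarrow> \<not> dec aH n i p'' L''))
     \<or> (mu R \<ge> mu R - 2 * dlt n \<and>
        (\<forall>p'' q y. (\<forall>t<Suc L. p'' t = p t) \<longrightarrow> assoc_eval aH (baire_pair p'' (sseq n)) = Some q \<longrightarrow> delta_real q = Some y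
             \<longrightarrow> (\<exists>j<Suc L. y \<in> code_interval (p j))))"
        apply (rule disjI1) using True unfolding B_def by blast
    qed
    then show ?thesis by (intro exI[of _ "(p, Suc L, R)"]) simp
  next
    case False
    then obtain p'' L'' R'' where c'': "cnd p'' L'' R''" and l'': "lee p'' L'' R'' p L R"
      and m'': "mu R'' \<ge> mu R - dlt n" and d'': "dec aH n i p'' L''" unfolding B_def by blast
    define z where "z = baire_pair p'' (sseq n)"
    obtain k0 where k0: "k0 \<le> 2 * L''" "aH (assoc_code i (map z [0..<k0])) > 0"
      using d'' unfolding dec_def z_def by blast
    define v where "v = aH (assoc_code i (map z [0..<(LEAST k. aH (assoc_code i (map z [0..<k])) > 0)])) - 1"
    define e :: rat where "e = 2 / 2^i"
    obtain cI where cI: "code_interval cI = {real_of_rat (nu_rat v - e) <..< real_of_rat (nu_rat v + e)}"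
      using code_interval_ex by blast
    define rr where "rr = real_of_rat (nu_rat v)"
    define I where "I = {rr - 2/2^i <..< rr + 2/2^i}"
    have cII: "code_interval cI = I" unfolding cI I_def rr_def e_def by (simp add: of_rat_diff of_rat_add of_rat_divide of_rat_power)
    define p' where "p' = p''(L'' := cI)"
    define R' where "R' = R'' - I"
    have cR'': "compact R''" using c'' unfolding cnd_def by blast
    have cnd': "cnd p' (Suc L'') R'"
      unfolding cnd_def
    proof (intro conjI allI impI)
      show "\<And>j. Suc L'' \<le> j \<Longrightarrow> p' j = 0" using c'' unfolding cnd_def p'_def by auto
      show "compact R'" unfolding R'_def I_def using cR'' by (intro compact_diff) auto
      fix j assume "j < Suc L''"
      then show "code_interval (p' j) \<inter> R' = {}"
      proof (cases "j = L''")
        case True then show ?thesis using cII unfolding p'_def R'_def by auto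
      next
        case False
        then have "j < L''" using \<open>j < Suc L''\<close> by simp
        then show ?thesis using c'' False unfolding cnd_def p'_def R'_def by auto
      qed
    qed
    have lee': "lee p' (Suc L'') R' p L R" using l'' unfolding lee_def p'_def R'_def by auto
    have LL: "L < Suc L''" using l'' unfolding lee_def by simp
    have fR: "R'' \<in> fmeasurable lborel" using cR'' by (rule fmeasurable_compact)
    have sR: "R'' \<in> sets lborel" using borel_closed[OF compact_imp_closed[OF cR'']] by simp
    have sI0: "I \<in> sets lborel" unfolding I_def by simp
    have sI: "R'' \<inter> I \<in> sets lborel" using sR sI0 by (rule sets.Int)
    have "mu R' = mu R'' - mu (R'' \<inter> I)"
    proof -
      have "R' = R'' - (R'' \<inter> I)" unfolding R'_def by auto
      moreover have "mu (R'' - (R'' \<inter> I)) = mu R'' - mu (R'' \<inter> I)"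
        using fR sI by (intro measure_Diff) (auto simp: fmeasurable_def)
      ultimately show ?thesis by simp
    qed
    moreover have "mu (R'' \<inter> I) \<le> 4 / 2^i"
    proof -
      have "mu (R'' \<inter> I) \<le> mu {rr - 2/2^i .. rr + 2/2^i}"
        using sI by (intro measure_mono_fmeasurable fmeasurable_compact) (auto simp: I_def)
      also have "\<dots> = 4 / 2^i" by simp
      finally show ?thesis .
    qed
    ultimately have mR': "mu R' \<ge> mu R - 2 * dlt n" using m'' pow_eq[of n] unfolding i_def by linarith
    have A: "\<forall>p3 q y. (\<forall>t<Suc L''. p3 t = p' t) \<longrightarrow> assoc_eval aH (baire_pair p3 (sseq n)) = Some q \<longrightarrow> delta_real q = Some y
             \<longrightarrow> (\<exists>j<Suc L''. y \<in> code_interval (p' j))"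
    proof (intro allI impI)
      fix p3 q y assume a: "\<forall>t<Suc L''. p3 t = p' t" "assoc_eval aH (baire_pair p3 (sseq n)) = Some q" "delta_real q = Some y"
      have "\<forall>t<L''. p3 t = p'' t" using a(1) unfolding p'_def by auto
      then have "\<forall>t<2*L''. baire_pair p3 (sseq n) t = z t" unfolding z_def by (rule pair_agree2)
      then have "\<forall>t<k0. baire_pair p3 (sseq n) t = z t" using k0(1) by auto
      then have "q i = v" using assoc_eval_dec[where a=aH and n=i and z=z and k=k0, OF k0(2) _ a(2)] unfolding v_def by blast
      then have "\<bar>rr - y\<bar> \<le> 1 / 2^i" using delta_real_bound[OF a(3), of i] unfolding rr_def by simp
      moreover have "(1::real) / 2^i < 2 / 2^i" by (simp add: divide_strict_right_mono)
      ultimately have "y \<in> I" unfolding I_def by (auto simp: abs_le_iff)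
      then show "\<exists>j<Suc L''. y \<in> code_interval (p' j)" using cII unfolding p'_def by (intro exI[of _ L'']) auto
    qed
    have "S2 aH n p L R p' (Suc L'') R'" unfolding S2_def using cnd' lee' LL mR' A by blast
    then show ?thesis by (intro exI[of _ "(p', Suc L'', R')"]) simp
  qed
qed


definition gg :: "nat \<Rightarrow> real" where "gg n = (2/7) * (1/8)^n"

lemma gg_step: "gg n - gg (Suc n) = 2 * dlt n"
  unfolding gg_def dlt_def by (simp add: field_simps)

lemma part2_main:
  assumes P: "P2 aH"
  shows False
proof -
  define st where "st = rec_nat ((\<lambda>_. 0)::baire, 0::nat, {0..1::real})
      (\<lambda>n x. SOME y. S2 aH n (fst x) (fst (snd x)) (snd (snd x)) (fst y) (fst (snd y)) (snd (snd y)))"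
  define Pp where "Pp n = fst (st n)" for n
  define Ll where "Ll n = fst (snd (st n))" for n
  define Rr where "Rr n = snd (snd (st n))" for n
  have st0: "Pp 0 = (\<lambda>_. 0)" "Ll 0 = 0" "Rr 0 = {0..1}" unfolding st_def Pp_def Ll_def Rr_def by simp_all
  have stS: "\<And>n. st (Suc n) = (SOME y. S2 aH n (Pp n) (Ll n) (Rr n) (fst y) (fst (snd y)) (snd (snd y)))"
    unfolding st_def Pp_def Ll_def Rr_def by simp
  have cnd0: "cnd (Pp 0) (Ll 0) (Rr 0)" unfolding cnd_def st0 by simp
  have SS: "\<And>n. cnd (Pp n) (Ll n) (Rr n) \<Longrightarrow> S2 aH n (Pp n) (Ll n) (Rr n) (Pp (Suc n)) (Ll (Suc n)) (Rr (Suc n))"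
  proof -
    fix n assume "cnd (Pp n) (Ll n) (Rr n)"
    from someI_ex[OF part2_step[OF this, of aH n]]
    show "S2 aH n (Pp n) (Ll n) (Rr n) (Pp (Suc n)) (Ll (Suc n)) (Rr (Suc n))"
      unfolding Pp_def[of "Suc n"] Ll_def[of "Suc n"] Rr_def[of "Suc n"] stS Pp_def[of n] Ll_def[of n] Rr_def[of n] .
  qed
  have cndn: "\<And>n. cnd (Pp n) (Ll n) (Rr n)"
  proof -
    fix n show "cnd (Pp n) (Ll n) (Rr n)"
      by (induction n) (use cnd0 SS in \<open>auto simp: S2_def\<close>)
  qed
  have Sn: "\<And>n. S2 aH n (Pp n) (Ll n) (Rr n) (Pp (Suc n)) (Ll (Suc n)) (Rr (Suc n))" using SS cndn by blast
  have Lmono: "\<And>n. Ll n < Ll (Suc n)" using Sn unfolding S2_def by blast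
  have Lge: "\<And>n. n \<le> Ll n"
  proof -
    fix n show "n \<le> Ll n" by (induction n) (use Lmono in \<open>auto simp: Suc_le_eq intro: le_less_trans\<close>)
  qed
  have leeS: "\<And>n. lee (Pp (Suc n)) (Ll (Suc n)) (Rr (Suc n)) (Pp n) (Ll n) (Rr n)" using Sn unfolding S2_def by blast
  have leech: "\<And>m n. n \<le> m \<Longrightarrow> lee (Pp m) (Ll m) (Rr m) (Pp n) (Ll n) (Rr n)"
  proof -
    fix m n :: nat assume "n \<le> m"
    then show "lee (Pp m) (Ll m) (Rr m) (Pp n) (Ll n) (Rr n)"
    proof (induction m rule: dec_induct)
      case base then show ?case unfolding lee_def by simp
    next
      case (step m)
      then show ?case using leeS[of m] unfolding lee_def by auto
    qed
  qed
  have muS: "\<And>n. mu (Rr (Suc n)) \<ge> mu (Rr n) - 2 * dlt n"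
  proof -
    fix n
    have "dlt n \<ge> 0" unfolding dlt_def by simp
    then show "mu (Rr (Suc n)) \<ge> mu (Rr n) - 2 * dlt n" using Sn[of n] unfolding S2_def by auto
  qed
  have phi: "\<And>m n. n \<le> m \<Longrightarrow> mu (Rr n) - gg n \<le> mu (Rr m) - gg m"
  proof -
    fix m n :: nat assume "n \<le> m"
    then show "mu (Rr n) - gg n \<le> mu (Rr m) - gg m"
    proof (induction m rule: dec_induct)
      case base then show ?case by simp
    next
      case (step m)
      then show ?case using muS[of m] gg_step[of m] by linarith
    qed
  qed
  have ggpos: "\<And>n. gg n \<ge> 0" unfolding gg_def by simp
  have mupos: "\<And>n. mu (Rr n) > 0"
  proof -
    fix n
    have "mu (Rr 0) - gg 0 \<le> mu (Rr n) - gg n" using phi by blast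
    moreover have "mu (Rr 0) = 1" unfolding st0 by simp
    moreover have "gg 0 = 2/7" unfolding gg_def by simp
    ultimately show "mu (Rr n) > 0" using ggpos[of n] by linarith
  qed
  have Rne: "\<And>n. Rr n \<noteq> {}" using mupos by (metis less_irrefl measure_empty)
  have Rc: "\<And>n. compact (Rr n)" using cndn unfolding cnd_def by blast
  have Rsub: "\<And>m n. n \<le> m \<Longrightarrow> Rr m \<subseteq> Rr n" using leech unfolding lee_def by blast
  obtain x where x: "\<And>n. x \<in> Rr n" using compact_nest[of Rr, OF Rc Rne Rsub] by blast
  define pinf where "pinf = (\<lambda>t. Pp (Suc t) t)"
  have agr: "\<And>n. \<forall>t<Ll n. pinf t = Pp n t"
    unfolding pinf_def
    by (rule limit_seq[where P=Pp and L=Ll]) (use Lmono leeS in \<open>auto simp: lee_def\<close>)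
  have xdc: "x \<in> dc pinf"
  proof -
    have "\<And>t. x \<notin> code_interval (pinf t)"
    proof -
      fix t
      have "t < Ll (Suc t)" using Lge[of "Suc t"] by simp
      then have "code_interval (Pp (Suc t) t) \<inter> Rr (Suc t) = {}" using cndn[of "Suc t"] unfolding cnd_def by blast
      then show "x \<notin> code_interval (pinf t)" using x[of "Suc t"] unfolding pinf_def by blast
    qed
    then show ?thesis unfolding dc_def by blast
  qed
  then obtain n q y where H: "assoc_eval aH (baire_pair pinf (sseq n)) = Some q" and dq: "delta_real q = Some y"
      and ydc: "y \<in> dc pinf" using P unfolding P2_def by blast
  have agrn: "\<forall>t<Ll (Suc n). pinf t = Pp (Suc n) t" using agr by blast
  from Sn[of n] have
    "(mu (Rr (Suc n)) = mu (Rr n) \<and> (\<exists>i. \<forall>p'' L'' R''. cnd p'' L'' R'' \<longrightarrow> lee p'' L'' R'' (Pp n) (Ll n) (Rr n) \<longrightarrow> mu R'' \<ge> mu (Rr n) - dlt n \<longrightarrow> \<not> dec aH n i p'' L''))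
     \<or> (\<forall>p'' q y. (\<forall>t<Ll (Suc n). p'' t = Pp (Suc n) t) \<longrightarrow> assoc_eval aH (baire_pair p'' (sseq n)) = Some q \<longrightarrow> delta_real q = Some y
             \<longrightarrow> (\<exists>j<Ll (Suc n). y \<in> code_interval (Pp (Suc n) j)))"
    unfolding S2_def by blast
  then show False
  proof
    assume "\<forall>p'' q y. (\<forall>t<Ll (Suc n). p'' t = Pp (Suc n) t) \<longrightarrow> assoc_eval aH (baire_pair p'' (sseq n)) = Some q \<longrightarrow> delta_real q = Some y
             \<longrightarrow> (\<exists>j<Ll (Suc n). y \<in> code_interval (Pp (Suc n) j))"
    then obtain j where "j < Ll (Suc n)" "y \<in> code_interval (Pp (Suc n) j)" using agrn H dq by blast
    then have "y \<in> code_interval (pinf j)" using agrn by simp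
    then show False using ydc unfolding dc_def by blast
  next
    assume B: "mu (Rr (Suc n)) = mu (Rr n) \<and> (\<exists>i. \<forall>p'' L'' R''. cnd p'' L'' R'' \<longrightarrow> lee p'' L'' R'' (Pp n) (Ll n) (Rr n) \<longrightarrow> mu R'' \<ge> mu (Rr n) - dlt n \<longrightarrow> \<not> dec aH n i p'' L'')"
    then obtain i where i: "\<forall>p'' L'' R''. cnd p'' L'' R'' \<longrightarrow> lee p'' L'' R'' (Pp n) (Ll n) (Rr n) \<longrightarrow> mu R'' \<ge> mu (Rr n) - dlt n \<longrightarrow> \<not> dec aH n i p'' L''"
      by blast
    obtain k0 where k0: "aH (assoc_code i (map (baire_pair pinf (sseq n)) [0..<k0])) > 0"
      using assoc_eval_ex[OF H] by blast
    define m where "m = Suc n + k0"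
    have "mu (Rr (Suc n)) - gg (Suc n) \<le> mu (Rr m) - gg m" using phi unfolding m_def by simp
    moreover have "gg (Suc n) \<le> dlt n" unfolding gg_def dlt_def by simp
    ultimately have mum: "mu (Rr m) \<ge> mu (Rr n) - dlt n" using B ggpos[of m] by linarith
    have km: "k0 \<le> Ll m" using Lge[of m] unfolding m_def by simp
    have "\<forall>t<2 * Ll m. baire_pair (Pp m) (sseq n) t = baire_pair pinf (sseq n) t"
      using agr[of m] by (intro pair_agree2) auto
    then have "map (baire_pair (Pp m) (sseq n)) [0..<k0] = map (baire_pair pinf (sseq n)) [0..<k0]"
      using km by auto
    then have "aH (assoc_code i (map (baire_pair (Pp m) (sseq n)) [0..<k0])) > 0" using k0 by (simp only:)
    then have "dec aH n i (Pp m) (Ll m)" unfolding dec_def using km by (intro exI[of _ k0]) auto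
    moreover have "lee (Pp m) (Ll m) (Rr m) (Pp n) (Ll n) (Rr n)" using leech unfolding m_def by simp
    ultimately show False using i cndn[of m] mum by blast
  qed
qed



definition cn :: "real \<Rightarrow> baire" where
  "cn x = (SOME c. \<forall>i. \<bar>real_of_rat (nu_rat (c i)) - x\<bar> \<le> 1/2^(i+2))"

lemma cn_name: "delta_real (cn x) = Some x"
  unfolding cn_def using someI_ex[OF canon_name_ex[of x]] canon_delta by blast

lemma sort_in_sseq: "\<exists>n. Sort_fun k = sseq n"
proof (cases "finite {i. k i = 0}")
  case True
  then show ?thesis unfolding Sort_fun_def sseq_def by (intro exI[of _ "Suc (card {i. k i = 0})"]) simp
next
  case False
  then show ?thesis unfolding Sort_fun_def sseq_def by (intro exI[of _ 0]) simp
qed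

lemma sort_01: "Sort_fun k i \<le> 1"
  unfolding Sort_fun_def by auto

lemma delta_cantor_Some: "delta_cantor q = Some y \<Longrightarrow> y = q \<and> (\<forall>n. q n \<le> 1)"
  unfolding delta_cantor_def by (auto split: if_splits)

lemma get_P1:
  assumes R: "\<forall>G. is_realizer delta_closed delta_real CR_dom CR_prob G \<longrightarrow>
           is_realizer delta_cantor delta_cantor Sort_dom Sort_prob
             (\<lambda>p. case assoc_eval aK p of
                     None \<Rightarrow> None
                   | Some k \<Rightarrow> (case G k of None \<Rightarrow> None
                                | Some r \<Rightarrow> assoc_eval aH (baire_pair p r)))"
  shows "P1 aH aK"
  unfolding P1_def
proof (intro allI impI)
  fix p :: baire assume p01: "\<forall>n. p n \<le> 1"
  define G0 where "G0 = (\<lambda>k. if dc k = {} then None else Some (cn (SOME x. x \<in> dc k)))"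
  have G0r: "is_realizer delta_closed delta_real CR_dom CR_prob G0"
    unfolding is_realizer_def
  proof (intro allI impI)
    fix k A assume a: "delta_closed k = Some A" "A \<in> CR_dom"
    then have A: "A = dc k" "dc k \<noteq> {}" using delta_closed_dc[of k] unfolding CR_dom_def by auto
    then have "(SOME x. x \<in> dc k) \<in> dc k" by (simp add: some_in_eq)
    then show "\<exists>q y. G0 k = Some q \<and> delta_real q = Some y \<and> y \<in> CR_prob A"
      using A cn_name unfolding G0_def CR_prob_def by auto
  qed
  have dp: "delta_cantor p = Some p" "p \<in> Sort_dom" using p01 unfolding delta_cantor_def Sort_dom_def by auto
  have comp: "\<And>G. is_realizer delta_closed delta_real CR_dom CR_prob G \<Longrightarrow>
     \<exists>q y. (case assoc_eval aK p of None \<Rightarrow> None | Some k \<Rightarrow> (case G k of None \<Rightarrow> None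
                                | Some r \<Rightarrow> assoc_eval aH (baire_pair p r))) = Some q \<and> delta_cantor q = Some y \<and> y \<in> Sort_prob p"
    using R dp unfolding is_realizer_def by blast
  obtain q y where qy: "(case assoc_eval aK p of None \<Rightarrow> None | Some k \<Rightarrow> (case G0 k of None \<Rightarrow> None
                                | Some r \<Rightarrow> assoc_eval aH (baire_pair p r))) = Some q"
    using comp[OF G0r] by blast
  then obtain k where k: "assoc_eval aK p = Some k" by (cases "assoc_eval aK p") auto
  then have "G0 k \<noteq> None" using qy by (cases "G0 k") auto
  then have ne: "dc k \<noteq> {}" unfolding G0_def by (auto split: if_splits)
  have H: "\<forall>x r. x \<in> dc k \<longrightarrow> delta_real r = Some x \<longrightarrow> assoc_eval aH (baire_pair p r) = Some (Sort_fun p)"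
  proof (intro allI impI)
    fix x r assume xr: "x \<in> dc k" "delta_real r = Some x"
    define G1 where "G1 = G0(k := Some r)"
    have G1r: "is_realizer delta_closed delta_real CR_dom CR_prob G1"
      unfolding is_realizer_def
    proof (intro allI impI)
      fix k' A assume a: "delta_closed k' = Some A" "A \<in> CR_dom"
      show "\<exists>q y. G1 k' = Some q \<and> delta_real q = Some y \<and> y \<in> CR_prob A"
      proof (cases "k' = k")
        case True
        then have "A = dc k" using a delta_closed_dc by simp
        then show ?thesis using True xr unfolding G1_def CR_prob_def by auto
      next
        case False
        then show ?thesis using G0r a unfolding G1_def is_realizer_def by auto
      qed
    qed
    obtain q y where "assoc_eval aH (baire_pair p r) = Some q" "delta_cantor q = Some y" "y \<in> Sort_prob p"
      using comp[OF G1r] k unfolding G1_def by auto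
    then show "assoc_eval aH (baire_pair p r) = Some (Sort_fun p)"
      using delta_cantor_Some unfolding Sort_prob_def by auto
  qed
  show "\<exists>k. assoc_eval aK p = Some k \<and> dc k \<noteq> {} \<and>
      (\<forall>x r. x \<in> dc k \<longrightarrow> delta_real r = Some x \<longrightarrow> assoc_eval aH (baire_pair p r) = Some (Sort_fun p))"
    using k ne H by blast
qed

lemma get_P2:
  assumes R: "\<forall>G. is_realizer delta_cantor delta_cantor Sort_dom Sort_prob G \<longrightarrow>
           is_realizer delta_closed delta_real CR_dom CR_prob
             (\<lambda>p. case assoc_eval aK p of
                     None \<Rightarrow> None
                   | Some k \<Rightarrow> (case G k of None \<Rightarrow> None
                                | Some r \<Rightarrow> assoc_eval aH (baire_pair p r)))"
  shows "P2 aH"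
  unfolding P2_def
proof (intro allI impI)
  fix p :: baire assume ne: "dc p \<noteq> {}"
  define G0 where "G0 = (\<lambda>k::baire. if \<forall>n. k n \<le> 1 then Some (Sort_fun k) else None)"
  have G0r: "is_realizer delta_cantor delta_cantor Sort_dom Sort_prob G0"
    unfolding is_realizer_def
  proof (intro allI impI)
    fix k x assume a: "delta_cantor k = Some x" "x \<in> Sort_dom"
    then have "x = k" "\<forall>n. k n \<le> 1" using delta_cantor_Some by auto
    then show "\<exists>q y. G0 k = Some q \<and> delta_cantor q = Some y \<and> y \<in> Sort_prob x"
      unfolding G0_def delta_cantor_def Sort_prob_def using sort_01 by auto
  qed
  have "delta_closed p = Some (dc p)" "dc p \<in> CR_dom" using delta_closed_dc closed_dc ne unfolding CR_dom_def by auto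
  then obtain q y where qy: "(case assoc_eval aK p of None \<Rightarrow> None | Some k \<Rightarrow> (case G0 k of None \<Rightarrow> None
                                | Some r \<Rightarrow> assoc_eval aH (baire_pair p r))) = Some q" "delta_real q = Some y" "y \<in> CR_prob (dc p)"
    using R G0r unfolding is_realizer_def by blast
  then obtain k where k: "assoc_eval aK p = Some k" by (cases "assoc_eval aK p") auto
  then have "G0 k \<noteq> None" using qy by (cases "G0 k") auto
  then have "G0 k = Some (Sort_fun k)" unfolding G0_def by (auto split: if_splits)
  then have "assoc_eval aH (baire_pair p (Sort_fun k)) = Some q" using qy k by simp
  moreover obtain n where "Sort_fun k = sseq n" using sort_in_sseq by blast
  ultimately show "\<exists>n q y. assoc_eval aH (baire_pair p (sseq n)) = Some q \<and> delta_real q = Some y \<and> y \<in> dc p"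
    using qy unfolding CR_prob_def by auto
qed

theorem proposition3p5:
  shows "\<not> weihrauch_le delta_cantor delta_cantor Sort_dom Sort_prob
                        delta_closed delta_real CR_dom CR_prob
       \<and> \<not> weihrauch_le delta_closed delta_real CR_dom CR_prob
                        delta_cantor delta_cantor Sort_dom Sort_prob"
proof
  show "\<not> weihrauch_le delta_cantor delta_cantor Sort_dom Sort_prob
                        delta_closed delta_real CR_dom CR_prob"
  proof
    assume "weihrauch_le delta_cantor delta_cantor Sort_dom Sort_prob delta_closed delta_real CR_dom CR_prob"
    then obtain aH aK where "\<forall>G. is_realizer delta_closed delta_real CR_dom CR_prob G \<longrightarrow>
           is_realizer delta_cantor delta_cantor Sort_dom Sort_prob
             (\<lambda>p. case assoc_eval aK p of
                     None \<Rightarrow> None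
                   | Some k \<Rightarrow> (case G k of None \<Rightarrow> None
                                | Some r \<Rightarrow> assoc_eval aH (baire_pair p r)))"
      unfolding weihrauch_le_def by blast
    then show False using part1_main get_P1 by blast
  qed
  show "\<not> weihrauch_le delta_closed delta_real CR_dom CR_prob
                        delta_cantor delta_cantor Sort_dom Sort_prob"
  proof
    assume "weihrauch_le delta_closed delta_real CR_dom CR_prob delta_cantor delta_cantor Sort_dom Sort_prob"
    then obtain aH aK where "\<forall>G. is_realizer delta_cantor delta_cantor Sort_dom Sort_prob G \<longrightarrow>
           is_realizer delta_closed delta_real CR_dom CR_prob
             (\<lambda>p. case assoc_eval aK p of
                     None \<Rightarrow> None
                   | Some k \<Rightarrow> (case G k of None \<Rightarrow> None
                                | Some r \<Rightarrow> assoc_eval aH (baire_pair p r)))"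
      unfolding weihrauch_le_def by blast
    then show False using part2_main get_P2 by blast
  qed
qed

end
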